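(* Let $N\ge2$, $\tilde m\in(0,1)^N$ with entries summing to $1$, $\mathbb{U}=\{X\in\mathbb{R}^{N\times 3}\mid \tilde m^\top X=\mathbf{0}^\top\}$, $m=3(N-1)$, $\varphi:\mathbb{R}^m\to\mathbb{U}$ a linear isometric isomorphism, $\mathbb{T}\subseteq\mathrm{O}(3)$, and $\mathbb{P}$ the set of $N\times N$ permutation matrices mapping $\mathbb{U}$ into itself. Let $\hat\varepsilon^\varphi_\theta:\mathbb{U}\times\mathbb{R}^{N\times d}\times\{0,\dots,T\}\to\mathbb{U}$ be a function (the denoiser) such that for every $R\in\mathbb{T}$ and $\Pi\in\mathbb{P}$, $$\hat\varepsilon^\varphi_\theta(\Pi XR^\top,\Pi C,t)=\Pi\,\hat\varepsilon^\varphi_\theta(X,C,t)\,R^\top\quad\text{for all }X\in\mathbb{U},\ C\in\mathbb{R}^{N\times d},\ t.$$ Then the transitions $p_\theta(z_{t-1}\mid z_t,C)$ ($1\le t\le T$) and $p_\theta(x\mid z_0,C)$ of the associated diffusion model are $(\mathbb{T},\mathbb{P})$-equivariant.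
   Context: Noise schedule: $\alpha_t\in(0,1)$ for $t=0,\dots,T$, $\sigma_t^2=1-\alpha_t^2$, $\alpha_{-1}=1$, $\tilde\alpha_t=\alpha_t/\alpha_{t-1}$, $\tilde\sigma_t^2=\sigma_t^2-\tilde\alpha_t^2\sigma_{t-1}^2$. The denoiser on $\mathbb{R}^m$ is $\hat\varepsilon_\theta(u,C,t)=\varphi^{-1}(\hat\varepsilon^\varphi_\theta(\varphi(u),C,t))$, and $\hat x_\theta(u,C,t)=\frac{1}{\alpha_t}u-\frac{\sigma_t}{\alpha_t}\hat\varepsilon_\theta(u,C,t)$. The transitions are $p_\theta(x\mid z_0,C)=\mathcal{N}(x;\hat x_\theta(z_0,C,0),\alpha_0^2\sigma_0^{-2}I_m)$ and, for $t\ge1$, $p_\theta(z_{t-1}\mid z_t,C)=\mathcal{N}\big(z_{t-1};\frac{\tilde\alpha_t\sigma_{t-1}^2}{\sigma_t^2}z_t+\frac{\alpha_{t-1}\tilde\sigma_t^2}{\sigma_t^2}\hat x_\theta(z_t,C,t),\frac{\tilde\sigma_t^2\sigma_{t-1}^2}{\sigma_t^2}I_m\big)$. For $R\in\mathbb{T}$ and $\Pi\in\mathbb{P}$ define $\lambda(u)=\varphi^{-1}(\Pi\varphi(u)R^\top)$. A conditional density $p(\cdot\mid\cdot,\cdot):\mathbb{R}^m\times\mathbb{R}^m\times\mathbb{R}^{N\times d}\to\mathbb{R}$ is $(\mathbb{T},\mathbb{P})$-equivariant if $p(\lambda(u)\mid\lambda(u'),\Pi C)=p(u\mid u',C)$ for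 all $R\in\mathbb{T}$, $\Pi\in\mathbb{P}$, $u,u'\in\mathbb{R}^m$, $C\in\mathbb{R}^{N\times d}$. *)

theory Defs
  imports "HOL-Analysis.Analysis"
begin

definition centred_space :: "real ^ 'n \<Rightarrow> (real ^ 3 ^ 'n) set" where
  "centred_space mt = {X. \<forall>j. (\<Sum>i\<in>UNIV. mt $ i * X $ i $ j) = 0}"

definition permutation_matrix :: "real ^ 'n ^ 'n \<Rightarrow> bool" where
  "permutation_matrix P \<longleftrightarrow>
     (\<exists>p. p permutes (UNIV :: 'n set) \<and> P = (\<chi> i j. if p i = j then 1 else 0))"

definition perm_set :: "real ^ 'n \<Rightarrow> (real ^ 'n ^ 'n) set" where
  "perm_set mt = {P. permutation_matrix P \<and> (\<forall>X \<in> centred_space mt. P ** X \<in> centred_space mt)}"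

definition gauss_dens :: "real \<Rightarrow> 'a::euclidean_space \<Rightarrow> 'a \<Rightarrow> real" where
  "gauss_dens v mu x =
     (2 * pi * v) powr (- (real DIM('a)) / 2) * exp (- (norm (x - mu))\<^sup>2 / (2 * v))"

text \<open>Noise schedule, with alpha_{-1} = 1 (so sigma_{-1} = 0).\<close>
definition alpha_prev :: "(nat \<Rightarrow> real) \<Rightarrow> nat \<Rightarrow> real" where
  "alpha_prev \<alpha> t = (if t = 0 then 1 else \<alpha> (t - 1))"

definition sig2 :: "(nat \<Rightarrow> real) \<Rightarrow> nat \<Rightarrow> real" where
  "sig2 \<alpha> t = 1 - (\<alpha> t)\<^sup>2"

definition sig :: "(nat \<Rightarrow> real) \<Rightarrow> nat \<Rightarrow> real" where
  "sig \<alpha> t = sqrt (sig2 \<alpha> t)"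

definition sig2_prev :: "(nat \<Rightarrow> real) \<Rightarrow> nat \<Rightarrow> real" where
  "sig2_prev \<alpha> t = 1 - (alpha_prev \<alpha> t)\<^sup>2"

definition alpha_tilde :: "(nat \<Rightarrow> real) \<Rightarrow> nat \<Rightarrow> real" where
  "alpha_tilde \<alpha> t = \<alpha> t / alpha_prev \<alpha> t"

definition sig2_tilde :: "(nat \<Rightarrow> real) \<Rightarrow> nat \<Rightarrow> real" where
  "sig2_tilde \<alpha> t = sig2 \<alpha> t - (alpha_tilde \<alpha> t)\<^sup>2 * sig2_prev \<alpha> t"

definition eps_m ::
  "('m::euclidean_space \<Rightarrow> real ^ 3 ^ 'n) \<Rightarrow>
   (real ^ 3 ^ 'n \<Rightarrow> real ^ 'd ^ 'n \<Rightarrow> nat \<Rightarrow> real ^ 3 ^ 'n) \<Rightarrow>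
   'm \<Rightarrow> real ^ 'd ^ 'n \<Rightarrow> nat \<Rightarrow> 'm" where
  "eps_m \<phi> epsphi u C t = inv_into UNIV \<phi> (epsphi (\<phi> u) C t)"

definition xhat ::
  "(nat \<Rightarrow> real) \<Rightarrow> ('m::euclidean_space \<Rightarrow> real ^ 3 ^ 'n) \<Rightarrow>
   (real ^ 3 ^ 'n \<Rightarrow> real ^ 'd ^ 'n \<Rightarrow> nat \<Rightarrow> real ^ 3 ^ 'n) \<Rightarrow>
   'm \<Rightarrow> real ^ 'd ^ 'n \<Rightarrow> nat \<Rightarrow> 'm" where
  "xhat \<alpha> \<phi> epsphi u C t =
     (1 / \<alpha> t) *\<^sub>R u - (sig \<alpha> t / \<alpha> t) *\<^sub>R eps_m \<phi> epsphi u C t"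

definition p_final ::
  "(nat \<Rightarrow> real) \<Rightarrow> ('m::euclidean_space \<Rightarrow> real ^ 3 ^ 'n) \<Rightarrow>
   (real ^ 3 ^ 'n \<Rightarrow> real ^ 'd ^ 'n \<Rightarrow> nat \<Rightarrow> real ^ 3 ^ 'n) \<Rightarrow>
   'm \<Rightarrow> 'm \<Rightarrow> real ^ 'd ^ 'n \<Rightarrow> real" where
  "p_final \<alpha> \<phi> epsphi x z0 C =
     gauss_dens ((\<alpha> 0)\<^sup>2 / sig2 \<alpha> 0) (xhat \<alpha> \<phi> epsphi z0 C 0) x"

definition p_trans ::
  "(nat \<Rightarrow> real) \<Rightarrow> ('m::euclidean_space \<Rightarrow> real ^ 3 ^ 'n) \<Rightarrow>
   (real ^ 3 ^ 'n \<Rightarrow> real ^ 'd ^ 'n \<Rightarrow> nat \<Rightarrow> real ^ 3 ^ 'n) \<Rightarrow>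
   nat \<Rightarrow> 'm \<Rightarrow> 'm \<Rightarrow> real ^ 'd ^ 'n \<Rightarrow> real" where
  "p_trans \<alpha> \<phi> epsphi t zprev zt C =
     gauss_dens (sig2_tilde \<alpha> t * sig2_prev \<alpha> t / sig2 \<alpha> t)
       ((alpha_tilde \<alpha> t * sig2_prev \<alpha> t / sig2 \<alpha> t) *\<^sub>R zt
        + (alpha_prev \<alpha> t * sig2_tilde \<alpha> t / sig2 \<alpha> t) *\<^sub>R xhat \<alpha> \<phi> epsphi zt C t)
       zprev"

definition lam ::
  "('m::euclidean_space \<Rightarrow> real ^ 3 ^ 'n) \<Rightarrow> real ^ 3 ^ 3 \<Rightarrow> real ^ 'n ^ 'n \<Rightarrow> 'm \<Rightarrow> 'm" where
  "lam \<phi> R P u = inv_into UNIV \<phi> (P ** \<phi> u ** transpose R)"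

definition TP_equivariant ::
  "('m::euclidean_space \<Rightarrow> real ^ 3 ^ 'n) \<Rightarrow> (real ^ 3 ^ 3) set \<Rightarrow> (real ^ 'n ^ 'n) set \<Rightarrow>
   ('m \<Rightarrow> 'm \<Rightarrow> real ^ 'd ^ 'n \<Rightarrow> real) \<Rightarrow> bool" where
  "TP_equivariant \<phi> TT PP p \<longleftrightarrow>
     (\<forall>R\<in>TT. \<forall>P\<in>PP. \<forall>u u' C.
        p (lam \<phi> R P u) (lam \<phi> R P u') (P ** C) = p u u' C)"

end

theory Submission imports Defs begin

lemma norm_orth_vec: assumes "orthogonal_matrix (R::real^'k^'k)" shows "norm (R *v x) = norm x"
proof -
  have "orthogonal_transformation ((*v) R)"
    using assms by (simp add: orthogonal_transformation_matrix matrix_of_matrix_vector_mul)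
  thus ?thesis by (simp add: orthogonal_transformation_norm)
qed

lemma rows_mult_transpose: "((X::real^'k^'n) ** transpose R) $ i = R *v (X $ i)"
  by (simp add: vec_eq_iff matrix_matrix_mult_def matrix_vector_mult_def transpose_def)
     (simp add: mult.commute[of "X $ i $ _"])

lemma norm_right_orth: assumes "orthogonal_matrix (R::real^'k^'k)"
  shows "norm ((X::real^'k^'n) ** transpose R) = norm X"
  unfolding norm_vec_def[of "X ** transpose R"] norm_vec_def[of X] rows_mult_transpose norm_orth_vec[OF assms] ..

lemma perm_rows: assumes "p permutes (UNIV::'n set)"
  shows "((\<chi> i j. if p i = j then 1 else 0) ** (X::real^'k^'n)) $ i = X $ p i"
proof -
  have "(\<Sum>k\<in>UNIV. (if p i = k then 1 else 0) * X $ k $ j) = X $ p i $ j" for j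
  proof -
    have "(\<Sum>k\<in>UNIV. (if p i = k then 1 else 0) * X $ k $ j) = (\<Sum>k\<in>UNIV. if p i = k then X $ k $ j else 0)"
      by (rule sum.cong) auto
    thus ?thesis by simp
  qed
  thus ?thesis by (simp add: vec_eq_iff matrix_matrix_mult_def)
qed

lemma norm_perm: assumes "permutation_matrix P" shows "norm (P ** (X::real^'k^'n)) = norm X"
proof -
  obtain p where p: "p permutes (UNIV::'n set)" "P = (\<chi> i j. if p i = j then 1 else 0)"
    using assms unfolding permutation_matrix_def by blast
  have "(\<Sum>i\<in>UNIV. (norm (X $ p i))\<^sup>2) = (\<Sum>i\<in>UNIV. (norm (X $ i))\<^sup>2)"
    using sum.permute[OF p(1), of "\<lambda>i. (norm (X $ i))\<^sup>2"] by (simp add: comp_def)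
  thus ?thesis unfolding norm_vec_def L2_set_def p(2) perm_rows[OF p(1)] by simp
qed

lemma centred_right: assumes "X \<in> centred_space mt" shows "X ** transpose R \<in> centred_space mt"
proof -
  have "(\<Sum>i\<in>UNIV. mt $ i * (X ** transpose R) $ i $ j) = (\<Sum>k\<in>UNIV. R $ j $ k * (\<Sum>i\<in>UNIV. mt $ i * X $ i $ k))" for j
  proof -
    have "(\<Sum>i\<in>UNIV. mt $ i * (X ** transpose R) $ i $ j) = (\<Sum>i\<in>UNIV. \<Sum>k\<in>UNIV. R $ j $ k * (mt $ i * X $ i $ k))"
      by (simp add: matrix_matrix_mult_def transpose_def sum_distrib_left mult_ac)
    also have "... = (\<Sum>k\<in>UNIV. \<Sum>i\<in>UNIV. R $ j $ k * (mt $ i * X $ i $ k))"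
      by (rule sum.swap)
    also have "... = (\<Sum>k\<in>UNIV. R $ j $ k * (\<Sum>i\<in>UNIV. mt $ i * X $ i $ k))"
      by (simp add: sum_distrib_left)
    finally show ?thesis .
  qed
  thus ?thesis using assms unfolding centred_space_def by simp
qed

lemma L_lin: "(P::real^'n^'n) ** (a *\<^sub>R X + b *\<^sub>R Y) ** transpose (R::real^'k^'k)
   = a *\<^sub>R (P ** X ** transpose R) + b *\<^sub>R (P ** Y ** transpose R)"
  by (simp add: vec_eq_iff matrix_matrix_mult_def sum.distrib sum_distrib_left algebra_simps)

lemma gauss_inv: fixes f :: "'a::euclidean_space \<Rightarrow> 'a" assumes "\<And>y. norm (f y) = norm y" and "f x - f mu = f (x - mu)"
  shows "gauss_dens v (f mu) (f x) = gauss_dens v mu x"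
  unfolding gauss_dens_def using assms by simp

theorem proposition6:
  fixes mt :: "real ^ 'n"
    and \<phi> :: "'m::euclidean_space \<Rightarrow> real ^ 3 ^ 'n"
    and TT :: "(real ^ 3 ^ 3) set"
    and epsphi :: "real ^ 3 ^ 'n \<Rightarrow> real ^ 'd ^ 'n \<Rightarrow> nat \<Rightarrow> real ^ 3 ^ 'n"
    and \<alpha> :: "nat \<Rightarrow> real"
    and Tmax :: nat
  assumes N2: "CARD('n) \<ge> 2"
    and mt_pos: "\<forall>i. 0 < mt $ i \<and> mt $ i < 1"
    and mt_sum: "(\<Sum>i\<in>UNIV. mt $ i) = 1"
    and dim_m: "DIM('m) = 3 * (CARD('n) - 1)"
    and phi_lin: "linear \<phi>"
    and phi_iso: "\<forall>u. norm (\<phi> u) = norm u"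
    and phi_bij: "bij_betw \<phi> UNIV (centred_space mt)"
    and TT_orth: "\<forall>R\<in>TT. orthogonal_matrix R"
    and alpha_range: "\<forall>t\<le>Tmax. 0 < \<alpha> t \<and> \<alpha> t < 1"
    and eps_range: "\<forall>X\<in>centred_space mt. \<forall>C t. t \<le> Tmax \<longrightarrow> epsphi X C t \<in> centred_space mt"
    and eps_equiv: "\<forall>R\<in>TT. \<forall>P\<in>perm_set mt. \<forall>X\<in>centred_space mt. \<forall>C t. t \<le> Tmax \<longrightarrow>
                      epsphi (P ** X ** transpose R) (P ** C) t = P ** epsphi X C t ** transpose R"
  shows "(\<forall>t. 1 \<le> t \<and> t \<le> Tmax \<longrightarrow>
            TP_equivariant \<phi> TT (perm_set mt) (p_trans \<alpha> \<phi> epsphi t))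
         \<and> TP_equivariant \<phi> TT (perm_set mt) (p_final \<alpha> \<phi> epsphi)"
proof -
  have injphi: "inj \<phi>" and imphi: "range \<phi> = centred_space mt"
    using phi_bij by (auto simp: bij_betw_def)
  have invphi: "inv_into UNIV \<phi> (\<phi> u) = u" for u using injphi by simp
  have phiinv: "\<phi> (inv_into UNIV \<phi> y) = y" if "y \<in> centred_space mt" for y
    using that imphi by (metis f_inv_into_f)
  have phiU: "\<phi> u \<in> centred_space mt" for u using imphi by blast
  have main: "\<forall>t\<le>Tmax. \<forall>x z C. gauss_dens v (a *\<^sub>R lam \<phi> R P z + b *\<^sub>R xhat \<alpha> \<phi> epsphi (lam \<phi> R P z) (P ** C) t) (lam \<phi> R P x)
      = gauss_dens v (a *\<^sub>R z + b *\<^sub>R xhat \<alpha> \<phi> epsphi z C t) x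
     \<and> xhat \<alpha> \<phi> epsphi (lam \<phi> R P z) (P ** C) t = lam \<phi> R P (xhat \<alpha> \<phi> epsphi z C t)"
    if R: "R \<in> TT" and P: "P \<in> perm_set mt" for R P v a b
  proof -
    define L where "L X = P ** X ** transpose R" for X
    have LU: "L X \<in> centred_space mt" if "X \<in> centred_space mt" for X
      using P that unfolding L_def perm_set_def by (auto intro: centred_right)
    have philam: "\<phi> (lam \<phi> R P u) = L (\<phi> u)" for u
      unfolding lam_def L_def[symmetric] by (rule phiinv[OF LU[OF phiU]])
    have lamlin: "lam \<phi> R P (c *\<^sub>R x + d *\<^sub>R y) = c *\<^sub>R lam \<phi> R P x + d *\<^sub>R lam \<phi> R P y" for c d x y
    proof -
      have "\<phi> (lam \<phi> R P (c *\<^sub>R x + d *\<^sub>R y)) = \<phi> (c *\<^sub>R lam \<phi> R P x + d *\<^sub>R lam \<phi> R P y)"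
        using phi_lin philam unfolding L_def
        by (simp add: linear_add linear_scale L_lin)
      thus ?thesis using injphi by (simp add: inj_eq)
    qed
    have lamnorm: "norm (lam \<phi> R P y) = norm y" for y
    proof -
      have "norm (lam \<phi> R P y) = norm (\<phi> (lam \<phi> R P y))" using phi_iso by simp
      also have "\<dots> = norm (\<phi> y)" unfolding philam L_def
      proof -
        have oR: "orthogonal_matrix R" using TT_orth R by blast
        have pP: "permutation_matrix P" using P unfolding perm_set_def by blast
        show "norm (P ** \<phi> y ** transpose R) = norm (\<phi> y)"
          unfolding norm_right_orth[OF oR] norm_perm[OF pP] ..
      qed
      finally show ?thesis using phi_iso by simp
    qed
    have lamdiff: "lam \<phi> R P x - lam \<phi> R P y = lam \<phi> R P (x - y)" for x y
      using lamlin[of 1 x "-1" y] by simp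
    show ?thesis
    proof (intro allI impI conjI)
      fix t x z C assume t: "t \<le> Tmax"
      have epsq: "eps_m \<phi> epsphi (lam \<phi> R P z) (P ** C) t = lam \<phi> R P (eps_m \<phi> epsphi z C t)"
      proof -
        have "epsphi (\<phi> (lam \<phi> R P z)) (P ** C) t = L (epsphi (\<phi> z) C t)"
          unfolding philam L_def using eps_equiv R P phiU t by blast
        moreover have "\<phi> (eps_m \<phi> epsphi z C t) = epsphi (\<phi> z) C t"
          unfolding eps_m_def using phiinv eps_range phiU t by blast
        ultimately show ?thesis unfolding eps_m_def lam_def L_def by simp
      qed
      show xq: "xhat \<alpha> \<phi> epsphi (lam \<phi> R P z) (P ** C) t = lam \<phi> R P (xhat \<alpha> \<phi> epsphi z C t)"
        unfolding xhat_def epsq using lamlin[of "1 / \<alpha> t" z "- (sig \<alpha> t / \<alpha> t)" "eps_m \<phi> epsphi z C t"] by simp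
      show "gauss_dens v (a *\<^sub>R lam \<phi> R P z + b *\<^sub>R xhat \<alpha> \<phi> epsphi (lam \<phi> R P z) (P ** C) t) (lam \<phi> R P x)
      = gauss_dens v (a *\<^sub>R z + b *\<^sub>R xhat \<alpha> \<phi> epsphi z C t) x"
        unfolding xq lamlin[symmetric] by (rule gauss_inv[of "lam \<phi> R P", OF lamnorm lamdiff])
    qed
  qed
  show ?thesis
  proof (intro conjI allI impI)
    fix t assume t: "1 \<le> t \<and> t \<le> Tmax"
    show "TP_equivariant \<phi> TT (perm_set mt) (p_trans \<alpha> \<phi> epsphi t)"
      unfolding TP_equivariant_def p_trans_def
    proof (intro ballI allI)
      fix R P u u' C assume R: "R \<in> TT" and P: "P \<in> perm_set mt"
      note m = main[OF R P, rule_format, OF conjunct2[OF t]]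
      show "gauss_dens (sig2_tilde \<alpha> t * sig2_prev \<alpha> t / sig2 \<alpha> t)
          ((alpha_tilde \<alpha> t * sig2_prev \<alpha> t / sig2 \<alpha> t) *\<^sub>R lam \<phi> R P u' +
           (alpha_prev \<alpha> t * sig2_tilde \<alpha> t / sig2 \<alpha> t) *\<^sub>R xhat \<alpha> \<phi> epsphi (lam \<phi> R P u') (P ** C) t)
          (lam \<phi> R P u) =
         gauss_dens (sig2_tilde \<alpha> t * sig2_prev \<alpha> t / sig2 \<alpha> t)
          ((alpha_tilde \<alpha> t * sig2_prev \<alpha> t / sig2 \<alpha> t) *\<^sub>R u' +
           (alpha_prev \<alpha> t * sig2_tilde \<alpha> t / sig2 \<alpha> t) *\<^sub>R xhat \<alpha> \<phi> epsphi u' C t)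
          u"
        by (rule conjunct1[OF m])
    qed
  next
    show "TP_equivariant \<phi> TT (perm_set mt) (p_final \<alpha> \<phi> epsphi)"
      unfolding TP_equivariant_def p_final_def
    proof (intro ballI allI)
      fix R P u u' C assume R: "R \<in> TT" and P: "P \<in> perm_set mt"
      note m = main[OF R P, of _ 0 1, rule_format, OF le0]
      show "gauss_dens ((\<alpha> 0)\<^sup>2 / sig2 \<alpha> 0) (xhat \<alpha> \<phi> epsphi (lam \<phi> R P u') (P ** C) 0) (lam \<phi> R P u) =
         gauss_dens ((\<alpha> 0)\<^sup>2 / sig2 \<alpha> 0) (xhat \<alpha> \<phi> epsphi u' C 0) u"
        using conjunct1[OF m] by simp
    qed
  qed
qed

end
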